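(* Let $L$ spin-orbitals be indexed by $\{1,\dots,L\}$ and let $N_{\mathrm{occ}}$ be an integer with $1\le N_{\mathrm{occ}}<L$. Call an operator an o-operator if it is a creation or annihilation operator $\hat a^\dagger_p$ or $\hat a_p$ with $p\in\{1,\dots,N_{\mathrm{occ}}\}$, and a v-operator if $p\in\{N_{\mathrm{occ}}+1,\dots,L\}$. Let $n_o,n_v\geq 0$ and consider $n_o$ o-creation operators, $n_o$ o-annihilation operators, $n_v$ v-creation operators and $n_v$ v-annihilation operators, all regarded as $2n_o+2n_v$ distinct objects. Call an ordering of these operators into a chain of length $2n_o+2n_v$ admissible if both of the following hold: (a) the word obtained by reading the o-operators of the chain from left to right and replacing each o-creation operator by "(" and each o-annihilation operator by ")" is a Dyck word; (b) the word obtained by reading the v-operators of the chain from left to right and replacing each v-annihilation operator by "(" and each v-creation operator by ")" is a Dyck word. Then the number of admissible orderings is $$C_{n_o}\,C_{n_v}\,\binom{2n_o+2n_v}{2n_o}\,(n_o!)^2\,(n_v!)^2,$$ where $C_m=\frac{1}{m+1}\binom{2m}{m}$ is the $m$-th Catalan number.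
   Context: A Dyck word is a finite word over $\{(,)\}$ with as many opening as closing brackets, every prefix of which contains at least as many opening as closing brackets (the empty word is a Dyck word). The reference state is the Fermi vacuum, the Slater determinant in which spin-orbitals $1,\dots,N_{\mathrm{occ}}$ are occupied and the others are empty; the pair of words in (a),(b) is the paper's "split-$\mathcal{L}_2$ translation", and the paper calls admissible chains those whose expectation value relatively to the Fermi vacuum is "possibly different from zero", since otherwise that expectation value vanishes. *)

theory Defs
  imports Main
begin

text \<open>Brackets: True stands for an opening bracket "(", False for a closing bracket ")".\<close>

definition dyck_word :: "bool list \<Rightarrow> bool" where
  "dyck_word w \<longleftrightarrow>
     length (filter (\<lambda>b. b) w) = length (filter Not w) \<and>
     (\<forall>k \<le> length w. length (filter Not (take k w)) \<le> length (filter (\<lambda>b. b) (take k w)))"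

datatype opkind = OCre | OAnn | VCre | VAnn

text \<open>The 2 n_o + 2 n_v distinct operators: a kind together with an index distinguishing
  operators of the same kind.\<close>
definition operators :: "nat \<Rightarrow> nat \<Rightarrow> (opkind \<times> nat) set" where
  "operators no nv =
     {(k, i). (k = OCre \<or> k = OAnn) \<and> i < no} \<union> {(k, i). (k = VCre \<or> k = VAnn) \<and> i < nv}"

definition o_word :: "(opkind \<times> nat) list \<Rightarrow> bool list" where
  "o_word c = map (\<lambda>x. fst x = OCre) (filter (\<lambda>x. fst x = OCre \<or> fst x = OAnn) c)"

definition v_word :: "(opkind \<times> nat) list \<Rightarrow> bool list" where
  "v_word c = map (\<lambda>x. fst x = VAnn) (filter (\<lambda>x. fst x = VCre \<or> fst x = VAnn) c)"

definition admissible :: "(opkind \<times> nat) list \<Rightarrow> bool" where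
  "admissible c \<longleftrightarrow> dyck_word (o_word c) \<and> dyck_word (v_word c)"

definition orderings :: "nat \<Rightarrow> nat \<Rightarrow> (opkind \<times> nat) list set" where
  "orderings no nv = {c. distinct c \<and> set c = operators no nv}"

definition catalan :: "nat \<Rightarrow> nat" where
  "catalan m = ((2 * m) choose m) div (m + 1)"

end

theory Submission imports Defs "HOL-Combinatorics.Multiset_Permutations" begin

fun merge :: "bool list \<Rightarrow> 'a list \<Rightarrow> 'a list \<Rightarrow> 'a list" where
  "merge [] a b = []"
| "merge (x#p) a b = (if x then hd a # merge p (tl a) b else hd b # merge p a (tl b))"

lemma merge_split: "merge (map P c) (filter P c) (filter (\<lambda>x. \<not> P x) c) = c"
  by (induction c) auto

lemma merge_props:
  assumes "length (filter (\<lambda>b. b) p) = length a" "length (filter Not p) = length b"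
    "\<forall>x\<in>set a. P x" "\<forall>x\<in>set b. \<not> P x"
  shows "map P (merge p a b) = p \<and> filter P (merge p a b) = a \<and> filter (\<lambda>x. \<not> P x) (merge p a b) = b"
  using assms
proof (induction p arbitrary: a b)
  case Nil
  then show ?case by simp
next
  case (Cons x p)
  show ?case
  proof (cases x)
    case True
    then obtain y a' where a: "a = y # a'" using Cons.prems by (cases a) auto
    have "map P (merge p a' b) = p \<and> filter P (merge p a' b) = a' \<and> filter (\<lambda>x. \<not> P x) (merge p a' b) = b"
      using Cons.IH[of a' b] Cons.prems True a by auto
    then show ?thesis using True a Cons.prems by auto
  next
    case False
    then obtain y b' where b: "b = y # b'" using Cons.prems by (cases b) auto
    have "map P (merge p a b') = p \<and> filter P (merge p a b') = a \<and> filter (\<lambda>x. \<not> P x) (merge p a b') = b'"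
      using Cons.IH[of a b'] Cons.prems False b by auto
    then show ?thesis using False b Cons.prems by auto
  qed
qed

lemma distinct_filter_split:
  "distinct c \<longleftrightarrow> distinct (filter P c) \<and> distinct (filter (\<lambda>x. \<not> P x) c)"
proof (induction c)
  case Nil
  then show ?case by simp
next
  case (Cons x c)
  show ?case
  proof (cases "P x")
    case True
    have mem: "x \<in> set c \<longleftrightarrow> x \<in> set (filter P c)" using True by simp
    have e: "filter P (x#c) = x # filter P c" "filter (\<lambda>x. \<not> P x) (x#c) = filter (\<lambda>x. \<not> P x) c"
      using True by simp_all
    show ?thesis unfolding e distinct.simps using Cons.IH mem by blast
  next
    case False
    have mem: "x \<in> set c \<longleftrightarrow> x \<in> set (filter (\<lambda>x. \<not> P x) c)" using False by simp
    have e: "filter P (x#c) = filter P c" "filter (\<lambda>x. \<not> P x) (x#c) = x # filter (\<lambda>x. \<not> P x) c"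
      using False by simp_all
    show ?thesis unfolding e distinct.simps using Cons.IH mem by blast
  qed
qed

lemma set_filter_split:
  "set c = set (filter P c) \<union> set (filter (\<lambda>x. \<not> P x) c)"
  by (induction c) simp_all

lemma shuffle_count:
  assumes fA: "finite A" and fB: "finite B" and disj: "A \<inter> B = {}"
  shows "card {c. distinct c \<and> set c = A \<union> B \<and> R (map (\<lambda>x. x \<in> A) c)
            \<and> P (filter (\<lambda>x. x \<in> A) c) \<and> Q (filter (\<lambda>x. x \<notin> A) c)}
       = card {p. length (filter (\<lambda>b. b) p) = card A \<and> length (filter Not p) = card B \<and> R p}
         * (card {a. distinct a \<and> set a = A \<and> P a} * card {b. distinct b \<and> set b = B \<and> Q b})"
proof -
  define C where "C = {c. distinct c \<and> set c = A \<union> B \<and> R (map (\<lambda>x. x \<in> A) c)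
            \<and> P (filter (\<lambda>x. x \<in> A) c) \<and> Q (filter (\<lambda>x. x \<notin> A) c)}"
  define PS where "PS = {p. length (filter (\<lambda>b. b) p) = card A \<and> length (filter Not p) = card B \<and> R p}"
  define AS where "AS = {a. distinct a \<and> set a = A \<and> P a}"
  define BS where "BS = {b. distinct b \<and> set b = B \<and> Q b}"
  define f where "f = (\<lambda>c. (map (\<lambda>x. x \<in> A) c, filter (\<lambda>x. x \<in> A) c, filter (\<lambda>x. x \<notin> A) c))"
  have inj: "inj_on f C"
  proof (rule inj_onI)
    fix c c' assume eq: "f c = f c'"
    have "merge (map (\<lambda>x. x \<in> A) c) (filter (\<lambda>x. x \<in> A) c) (filter (\<lambda>x. x \<notin> A) c)
        = merge (map (\<lambda>x. x \<in> A) c') (filter (\<lambda>x. x \<in> A) c') (filter (\<lambda>x. x \<notin> A) c')"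
      using eq unfolding f_def by simp
    then show "c = c'" by (simp only: merge_split)
  qed
  have img: "f ` C = PS \<times> (AS \<times> BS)"
  proof
    show "f ` C \<subseteq> PS \<times> (AS \<times> BS)"
    proof
      fix t assume "t \<in> f ` C"
      then obtain c where c: "c \<in> C" "t = f c" by auto
      have dc: "distinct c" using c unfolding C_def by simp
      have dA: "distinct (filter (\<lambda>x. x \<in> A) c)" and dB: "distinct (filter (\<lambda>x. x \<notin> A) c)"
        using dc distinct_filter_split[of c "\<lambda>x. x \<in> A"] by blast+
      have sA: "set (filter (\<lambda>x. x \<in> A) c) = A" and sB: "set (filter (\<lambda>x. x \<notin> A) c) = B"
        using c disj unfolding C_def by auto
      have lA: "length (filter (\<lambda>b. b) (map (\<lambda>x. x \<in> A) c)) = card A"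
        using distinct_card[OF dA] sA by (simp add: filter_map comp_def)
      have lB: "length (filter Not (map (\<lambda>x. x \<in> A) c)) = card B"
        using distinct_card[OF dB] sB by (simp add: filter_map comp_def)
      show "t \<in> PS \<times> (AS \<times> BS)"
        using c dA dB sA sB lA lB unfolding C_def PS_def AS_def BS_def f_def by auto
    qed
  next
    show "PS \<times> (AS \<times> BS) \<subseteq> f ` C"
    proof
      fix t assume t: "t \<in> PS \<times> (AS \<times> BS)"
      then obtain p a b where pab: "t = (p, a, b)" "p \<in> PS" "a \<in> AS" "b \<in> BS" by auto
      have la: "length a = card A" using pab distinct_card unfolding AS_def by fastforce
      have lb: "length b = card B" using pab distinct_card unfolding BS_def by fastforce
      define c where "c = merge p a b"
      have m: "map (\<lambda>x. x \<in> A) c = p \<and> filter (\<lambda>x. x \<in> A) c = a \<and> filter (\<lambda>x. x \<notin> A) c = b"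
        unfolding c_def
        by (rule merge_props) (use pab la lb disj in \<open>auto simp: PS_def AS_def BS_def\<close>)
      have da: "distinct a" "set a = A" using pab unfolding AS_def by simp_all
      have db: "distinct b" "set b = B" using pab unfolding BS_def by simp_all
      have "distinct (filter (\<lambda>x. x \<in> A) c) \<and> distinct (filter (\<lambda>x. x \<notin> A) c)"
        using m da db by metis
      then have "distinct c" using distinct_filter_split[of c "\<lambda>x. x \<in> A"] by blast
      moreover have "set c = A \<union> B"
      proof -
        have e: "set c = set (filter (\<lambda>x. x \<in> A) c) \<union> set (filter (\<lambda>x. x \<notin> A) c)"
          by (rule set_filter_split)
        show ?thesis using e m da db by metis
      qed
      ultimately have "c \<in> C" using m pab unfolding C_def PS_def AS_def BS_def by auto
      moreover have "f c = t" using m pab unfolding f_def by auto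
      ultimately show "t \<in> f ` C" by blast
    qed
  qed
  have "card C = card (f ` C)" using card_image[OF inj] by simp
  also have "\<dots> = card PS * (card AS * card BS)" using img by (simp add: card_cartesian_product)
  finally show ?thesis unfolding C_def PS_def AS_def BS_def .
qed



definition pok :: "bool list \<Rightarrow> bool" where
  "pok w \<longleftrightarrow> (\<forall>k \<le> length w. length (filter Not (take k w)) \<le> length (filter (\<lambda>b. b) (take k w)))"

definition DS :: "nat \<Rightarrow> nat \<Rightarrow> bool list set" where
  "DS a b = {w. length (filter (\<lambda>b. b) w) = a \<and> length (filter Not w) = b \<and> pok w}"

lemma pok_Nil[simp]: "pok []" by (simp add: pok_def)

lemma pok_snoc: "pok (w @ [x]) \<longleftrightarrow> pok w \<and> length (filter Not (w@[x])) \<le> length (filter (\<lambda>b. b) (w@[x]))"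
proof -
  have "pok (w @ [x]) \<longleftrightarrow> (\<forall>k \<le> length w. length (filter Not (take k w)) \<le> length (filter (\<lambda>b. b) (take k w)))
     \<and> length (filter Not (w@[x])) \<le> length (filter (\<lambda>b. b) (w@[x]))"
    unfolding pok_def
    by (auto simp: le_Suc_eq take_append simp del: filter_append)
  then show ?thesis by (simp add: pok_def)
qed

lemma pok_final: "pok w \<Longrightarrow> length (filter Not w) \<le> length (filter (\<lambda>b. b) w)"
  unfolding pok_def by (metis order_refl take_all)

lemma finite_DS: "finite (DS a b)"
proof -
  have "DS a b \<subseteq> {w. set w \<subseteq> UNIV \<and> length w = a + b}"
    unfolding DS_def using sum_length_filter_compl[of "\<lambda>b. b"] by auto
  then show ?thesis using finite_lists_length_eq[of "UNIV :: bool set" "a+b"] finite_subset by auto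
qed

lemma DS_rec:
  assumes "b \<le> a"
  shows "DS (Suc a) (Suc b) = (\<lambda>w. w @ [True]) ` DS a (Suc b) \<union> (\<lambda>w. w @ [False]) ` DS (Suc a) b"
proof
  show "DS (Suc a) (Suc b) \<subseteq> (\<lambda>w. w @ [True]) ` DS a (Suc b) \<union> (\<lambda>w. w @ [False]) ` DS (Suc a) b"
  proof
    fix w assume w: "w \<in> DS (Suc a) (Suc b)"
    then have "w \<noteq> []" by (auto simp: DS_def)
    then obtain v x where v: "w = v @ [x]" by (metis rev_exhaust)
    show "w \<in> (\<lambda>w. w @ [True]) ` DS a (Suc b) \<union> (\<lambda>w. w @ [False]) ` DS (Suc a) b"
      using w v pok_snoc[of v x] by (cases x) (auto simp: DS_def)
  qed
next
  show "(\<lambda>w. w @ [True]) ` DS a (Suc b) \<union> (\<lambda>w. w @ [False]) ` DS (Suc a) b \<subseteq> DS (Suc a) (Suc b)"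
    using assms by (auto simp: DS_def pok_snoc)
qed

lemma card_DS_rec:
  assumes "b \<le> a"
  shows "card (DS (Suc a) (Suc b)) = card (DS a (Suc b)) + card (DS (Suc a) b)"
proof -
  have d: "(\<lambda>w. w @ [True]) ` DS a (Suc b) \<inter> (\<lambda>w. w @ [False]) ` DS (Suc a) b = {}" by auto
  have "card (DS (Suc a) (Suc b)) = card ((\<lambda>w. w @ [True]) ` DS a (Suc b)) + card ((\<lambda>w. w @ [False]) ` DS (Suc a) b)"
    unfolding DS_rec[OF assms] by (rule card_Un_disjoint) (use d finite_DS in auto)
  also have "\<dots> = card (DS a (Suc b)) + card (DS (Suc a) b)"
    by (simp add: card_image inj_on_def)
  finally show ?thesis .
qed

lemma DS_empty: "a < b \<Longrightarrow> DS a b = {}"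
  by (auto simp: DS_def dest: pok_final)

lemma DS_0: "DS a 0 = {replicate a True}"
proof
  show "DS a 0 \<subseteq> {replicate a True}"
  proof
    fix w assume "w \<in> DS a 0"
    then have "length (filter Not w) = 0" "length (filter (\<lambda>b. b) w) = a" by (auto simp: DS_def)
    then have "\<forall>x\<in>set w. x" "length w = a"
      using sum_length_filter_compl[of "\<lambda>b. b" w] by (auto simp: filter_empty_conv)
    then show "w \<in> {replicate a True}" by (auto intro!: replicate_eqI)
  qed
next
  show "{replicate a True} \<subseteq> DS a 0"
    by (auto simp: DS_def pok_def)
qed

lemma card_DS_ballot:
  "b \<le> a \<Longrightarrow> card (DS a (Suc b)) + ((a + Suc b) choose b) = (a + Suc b) choose (Suc b)"
proof (induction "a + b" arbitrary: a b rule: less_induct)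
  case less
  show ?case
  proof (cases "b = a")
    case True
    then have "DS a (Suc b) = {}" by (simp add: DS_empty)
    moreover have "(a + Suc a) choose a = (a + Suc a) choose (Suc a)"
      by (metis add_Suc_right add_diff_cancel_left' binomial_symmetric le_add2 add.commute)
    ultimately show ?thesis using True by simp
  next
    case False
    then obtain a' where a: "a = Suc a'" "b \<le> a'" using less.prems by (cases a) auto
    have IH1: "card (DS a' (Suc b)) + ((a' + Suc b) choose b) = (a' + Suc b) choose (Suc b)"
      using less.hyps[of a' b] a by simp
    have rec: "card (DS a (Suc b)) = card (DS a' (Suc b)) + card (DS a b)"
      using card_DS_rec[of b a'] a by simp
    show ?thesis
    proof (cases b)
      case 0
      then show ?thesis using rec IH1 a by (simp add: DS_0)
    next
      case (Suc b')
      have IH2: "card (DS a (Suc b')) + ((a + Suc b') choose b') = (a + Suc b') choose (Suc b')"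
        using less.hyps[of a b'] a Suc by simp
      define n where "n = a' + Suc b"
      have n1: "a + Suc b = Suc n" "a + Suc b' = n" using a Suc by (auto simp: n_def)
      have p1: "Suc n choose Suc b = (n choose b) + (n choose Suc b)" by (rule binomial_Suc_Suc)
      have p2: "Suc n choose b = (n choose b') + (n choose b)" unfolding Suc by (rule binomial_Suc_Suc)
      have IH1': "card (DS a' (Suc b)) + (n choose b) = n choose (Suc b)" using IH1 by (simp only: n_def)
      have IH2': "card (DS a b) + (n choose b') = n choose b" using IH2 Suc by (simp only: n1)
      show ?thesis unfolding n1 using rec IH1' IH2' p1 p2 by linarith
    qed
  qed
qed

lemma card_DS_diag: "card (DS m m) = catalan m"
proof (cases m)
  case 0
  then show ?thesis by (simp add: DS_0 catalan_def)
next
  case (Suc k)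
  define n where "n = Suc k + Suc k"
  have b: "card (DS (Suc k) (Suc k)) + (n choose k) = n choose (Suc k)"
    unfolding n_def by (rule card_DS_ballot) simp
  have id: "(n choose k) * (k+2) = (n choose (Suc k)) * (k+1)"
  proof -
    have "(n choose k) * (k+2) = n * ((n - 1) choose k)"
      using binomial_absorb_comp[of n k] by (simp add: mult.commute n_def del: binomial_Suc_Suc)
    also have "\<dots> = (n choose (Suc k)) * (k+1)"
      using binomial_absorption[of k n] by (simp add: mult.commute del: binomial_Suc_Suc)
    finally show ?thesis .
  qed
  have "card (DS (Suc k) (Suc k)) * (k + 2) = n choose (Suc k)"
  proof -
    have "card (DS (Suc k) (Suc k)) * (k + 2) + (n choose (Suc k)) * (k+1)
        = (n choose (Suc k)) * (k+2)"
      using b id by (metis add_mult_distrib)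
    then show ?thesis by (simp add: algebra_simps del: binomial_Suc_Suc)
  qed
  then have e: "card (DS (Suc k) (Suc k)) * (Suc k + 1) = n choose (Suc k)" by simp
  have "(n choose (Suc k)) div (Suc k + 1) = card (DS (Suc k) (Suc k)) * (Suc k + 1) div (Suc k + 1)"
    by (simp only: e)
  also have "\<dots> = card (DS (Suc k) (Suc k))" by (rule nonzero_mult_div_cancel_right) simp
  finally have "(n choose (Suc k)) div (Suc k + 1) = card (DS (Suc k) (Suc k))" .
  moreover have "n = 2 * Suc k" by (simp add: n_def)
  ultimately show ?thesis using Suc unfolding catalan_def by simp
qed


lemma card_perms: "finite S \<Longrightarrow> card {a. distinct a \<and> set a = S} = fact (card S)"
  using card_permutations_of_set[of S] unfolding permutations_of_set_def
  by (simp add: conj_commute)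

lemma card_patterns:
  "card {p. length (filter (\<lambda>b. b) p) = n \<and> length (filter Not p) = m} = (n + m) choose n"
proof -
  define A where "A = {..<n}"
  define B where "B = {n..<n+m}"
  have "card {c. distinct c \<and> set c = A \<union> B \<and> (\<lambda>_. True) (map (\<lambda>x. x \<in> A) c)
            \<and> (\<lambda>_. True) (filter (\<lambda>x. x \<in> A) c) \<and> (\<lambda>_. True) (filter (\<lambda>x. x \<notin> A) c)}
       = card {p. length (filter (\<lambda>b. b) p) = card A \<and> length (filter Not p) = card B \<and> (\<lambda>_. True) p}
         * (card {a. distinct a \<and> set a = A \<and> (\<lambda>_. True) a} * card {b. distinct b \<and> set b = B \<and> (\<lambda>_. True) b})"
    by (rule shuffle_count) (auto simp: A_def B_def)
  moreover have "A \<union> B = {..<n+m}" by (auto simp: A_def B_def)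
  ultimately have "fact (n+m) = card {p. length (filter (\<lambda>b. b) p) = n \<and> length (filter Not p) = m} * (fact n * fact m)"
    using card_perms[of "{..<n+m}"] card_perms[of A] card_perms[of B] by (simp add: A_def B_def)
  moreover have "fact n * fact m * ((n+m) choose n) = (fact (n+m) :: nat)"
    using binomial_fact_lemma[of n "n+m"] by simp
  ultimately show ?thesis by (simp add: algebra_simps)
qed

lemma dyck_pok: "dyck_word p \<longleftrightarrow> length (filter (\<lambda>b. b) p) = length (filter Not p) \<and> pok p"
  unfolding dyck_word_def pok_def by simp

lemma dyck_perm_count:
  assumes "finite A" "finite B" "A \<inter> B = {}" "card A = n" "card B = n"
  shows "card {a. distinct a \<and> set a = A \<union> B \<and> dyck_word (map (\<lambda>x. x \<in> A) a)} = catalan n * (fact n * fact n)"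
proof -
  have "card {c. distinct c \<and> set c = A \<union> B \<and> dyck_word (map (\<lambda>x. x \<in> A) c)
            \<and> (\<lambda>_. True) (filter (\<lambda>x. x \<in> A) c) \<and> (\<lambda>_. True) (filter (\<lambda>x. x \<notin> A) c)}
       = card {p. length (filter (\<lambda>b. b) p) = card A \<and> length (filter Not p) = card B \<and> dyck_word p}
         * (card {a. distinct a \<and> set a = A \<and> (\<lambda>_. True) a} * card {b. distinct b \<and> set b = B \<and> (\<lambda>_. True) b})"
    by (rule shuffle_count) (use assms in auto)
  moreover have "{p. length (filter (\<lambda>b. b) p) = n \<and> length (filter Not p) = n \<and> dyck_word p} = DS n n"
    unfolding DS_def dyck_pok by auto
  ultimately show ?thesis using card_perms[of A] card_perms[of B] assms card_DS_diag[of n] by simp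
qed

definition ops :: "opkind \<Rightarrow> nat \<Rightarrow> (opkind \<times> nat) set" where
  "ops k n = (\<lambda>i. (k, i)) ` {..<n}"

lemma card_ops: "card (ops k n) = n"
  unfolding ops_def by (simp add: card_image inj_on_def)

lemma finite_ops: "finite (ops k n)"
  unfolding ops_def by simp

lemma mem_ops: "x \<in> ops k n \<longleftrightarrow> fst x = k \<and> snd x < n"
  unfolding ops_def by (cases x) auto

theorem mainTheorem2:
  fixes no nv :: nat
  shows "card {c \<in> orderings no nv. admissible c} =
    catalan no * catalan nv * ((2 * no + 2 * nv) choose (2 * no))
      * (fact no)^2 * (fact nv)^2"
proof -
  define Os where "Os = ops OCre no \<union> ops OAnn no"
  define Vs where "Vs = ops VAnn nv \<union> ops VCre nv"
  have opO: "operators no nv = Os \<union> Vs"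
    unfolding operators_def Os_def Vs_def by (auto simp: mem_ops)
  have fO: "finite Os" and fV: "finite Vs" by (simp_all add: Os_def Vs_def finite_ops)
  have dOV: "Os \<inter> Vs = {}" by (auto simp: Os_def Vs_def mem_ops)
  have cO: "card Os = 2 * no"
    unfolding Os_def by (subst card_Un_disjoint) (auto simp: finite_ops card_ops mem_ops)
  have cV: "card Vs = 2 * nv"
    unfolding Vs_def by (subst card_Un_disjoint) (auto simp: finite_ops card_ops mem_ops)
  have ow: "o_word c = map (\<lambda>x. x \<in> ops OCre no) (filter (\<lambda>x. x \<in> Os) c)" if "set c \<subseteq> Os \<union> Vs" for c
  proof -
    have "filter (\<lambda>x. fst x = OCre \<or> fst x = OAnn) c = filter (\<lambda>x. x \<in> Os) c"
      by (rule filter_cong) (use that in \<open>auto simp: Os_def Vs_def mem_ops\<close>)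
    moreover have "map (\<lambda>x. fst x = OCre) (filter (\<lambda>x. x \<in> Os) c) = map (\<lambda>x. x \<in> ops OCre no) (filter (\<lambda>x. x \<in> Os) c)"
      by (rule map_cong) (auto simp: Os_def mem_ops)
    ultimately show ?thesis unfolding o_word_def by simp
  qed
  have vw: "v_word c = map (\<lambda>x. x \<in> ops VAnn nv) (filter (\<lambda>x. x \<notin> Os) c)" if "set c \<subseteq> Os \<union> Vs" for c
  proof -
    have "filter (\<lambda>x. fst x = VCre \<or> fst x = VAnn) c = filter (\<lambda>x. x \<notin> Os) c"
      by (rule filter_cong) (use that in \<open>auto simp: Os_def Vs_def mem_ops\<close>)
    moreover have "map (\<lambda>x. fst x = VAnn) (filter (\<lambda>x. x \<notin> Os) c) = map (\<lambda>x. x \<in> ops VAnn nv) (filter (\<lambda>x. x \<notin> Os) c)"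
      by (rule map_cong) (use that in \<open>auto simp: Vs_def mem_ops\<close>)
    ultimately show ?thesis unfolding v_word_def by simp
  qed
  have ow2: "o_word a = map (\<lambda>x. x \<in> ops OCre no) a" if "set a = Os" for a
    using ow[of a] that by (simp add: filter_id_conv)
  have vw2: "v_word a = map (\<lambda>x. x \<in> ops VAnn nv) a" if "set a = Vs" for a
  proof -
    have "filter (\<lambda>x. x \<notin> Os) a = a" using that dOV by (auto simp: filter_id_conv)
    then show ?thesis using vw[of a] that by simp
  qed
  have S: "{c \<in> orderings no nv. admissible c} =
    {c. distinct c \<and> set c = Os \<union> Vs \<and> (\<lambda>_. True) (map (\<lambda>x. x \<in> Os) c)
            \<and> (\<lambda>a. dyck_word (o_word a)) (filter (\<lambda>x. x \<in> Os) c) \<and> (\<lambda>b. dyck_word (v_word b)) (filter (\<lambda>x. x \<notin> Os) c)}"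
  proof -
    { fix c assume c: "set c = Os \<union> Vs"
      have "set (filter (\<lambda>x. x \<in> Os) c) \<subseteq> Os \<union> Vs" "set (filter (\<lambda>x. x \<notin> Os) c) \<subseteq> Os \<union> Vs" using c by auto
      then have "admissible c \<longleftrightarrow> dyck_word (o_word (filter (\<lambda>x. x \<in> Os) c)) \<and> dyck_word (v_word (filter (\<lambda>x. x \<notin> Os) c))"
        unfolding admissible_def using ow[of c] vw[of c] ow[of "filter (\<lambda>x. x \<in> Os) c"] vw[of "filter (\<lambda>x. x \<notin> Os) c"] c
        by simp }
    then show ?thesis unfolding orderings_def opO by auto
  qed
  have X: "card {a. distinct a \<and> set a = Os \<and> (\<lambda>a. dyck_word (o_word a)) a} = catalan no * (fact no * fact no)"
  proof -
    have "{a. distinct a \<and> set a = Os \<and> (\<lambda>a. dyck_word (o_word a)) a}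
        = {a. distinct a \<and> set a = ops OCre no \<union> ops OAnn no \<and> dyck_word (map (\<lambda>x. x \<in> ops OCre no) a)}"
      using ow2 unfolding Os_def by auto
    also have "card \<dots> = catalan no * (fact no * fact no)"
      by (rule dyck_perm_count) (auto simp: finite_ops card_ops mem_ops)
    finally show ?thesis .
  qed
  have Y: "card {a. distinct a \<and> set a = Vs \<and> (\<lambda>a. dyck_word (v_word a)) a} = catalan nv * (fact nv * fact nv)"
  proof -
    have "{a. distinct a \<and> set a = Vs \<and> (\<lambda>a. dyck_word (v_word a)) a}
        = {a. distinct a \<and> set a = ops VAnn nv \<union> ops VCre nv \<and> dyck_word (map (\<lambda>x. x \<in> ops VAnn nv) a)}"
      using vw2 unfolding Vs_def by auto
    also have "card \<dots> = catalan nv * (fact nv * fact nv)"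
      by (rule dyck_perm_count) (auto simp: finite_ops card_ops mem_ops)
    finally show ?thesis .
  qed
  have P: "card {p. length (filter (\<lambda>b. b) p) = card Os \<and> length (filter Not p) = card Vs \<and> (\<lambda>_. True) p}
      = (2 * no + 2 * nv) choose (2 * no)"
    using card_patterns[of "2*no" "2*nv"] cO cV by simp
  have "card {c \<in> orderings no nv. admissible c} = ((2 * no + 2 * nv) choose (2 * no))
     * (catalan no * (fact no * fact no) * (catalan nv * (fact nv * fact nv)))"
  proof -
    note sh = shuffle_count[OF fO fV dOV, of "\<lambda>_. True" "\<lambda>a. dyck_word (o_word a)" "\<lambda>b. dyck_word (v_word b)"]
    show ?thesis unfolding S sh X Y P ..
  qed
  then show ?thesis by (simp only: power2_eq_square ac_simps)
qed

end
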